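(* Fix an integer $t\ge 2$ and a real base $b>1$, and let $\log$ and $\exp$ denote the logarithm and exponential to base $b$. For an integer $p\ge 1$, let $T_t(p)$ denote the number of $t$-ary trees whose path length equals $p$. Let $h(x)=-x\log x-(1-x)\log(1-x)$ be the binary entropy function and set $\alpha=h(t^{-1})\,t\log t$. Then, as $p\to\infty$, \[ T_t(p)=\exp\!\Big(\frac{\alpha p}{\log p}\,\big(1+o(1)\big)\Big), \] i.e. $\log T_t(p)\big/\big(\alpha p/\log p\big)\to 1$ as $p\to\infty$.
   Context: A $t$-ary tree is defined recursively as either empty or consisting of a root node together with an ordered $t$-tuple $(T_1,\dots,T_t)$ of disjoint $t$-ary subtrees, any of which may be empty; when $T_i$ is non-empty its root is a child of the root. Thus $t$-ary trees are ordered (plane) trees in which each node has $t$ labeled child positions, and two trees differ if a child occupies a different position. The depth of a node is the number of edges on the path from the root to it. The path length of a non-empty $t$-ary tree is the sum of the depths of all its nodes, i.e. $\sum_{j\ge1} j D_j$ where $D_j$ is the number of nodes at depth $j$. Only finite trees are considered; the number of nodes is not fixed in $T_t(p)$. *)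

theory Defs
  imports Complex_Main
begin

text \<open>Trees with ordered child positions.  Leaf is the empty tree;
  Node ts is a root whose i-th child position holds the subtree ts ! i
  (Leaf meaning that position is empty).\<close>
datatype tree = Leaf | Node "tree list"

fun tary :: "nat \<Rightarrow> tree \<Rightarrow> bool" where
  "tary t Leaf = True"
| "tary t (Node ts) = (length ts = t \<and> (\<forall>s\<in>set ts. tary t s))"

fun nodes :: "tree \<Rightarrow> nat" where
  "nodes Leaf = 0"
| "nodes (Node ts) = 1 + sum_list (map nodes ts)"

text \<open>Path length = sum of depths of all nodes: every node of a subtree
  gets its depth increased by one.\<close>
fun path_length :: "tree \<Rightarrow> nat" where
  "path_length Leaf = 0"
| "path_length (Node ts) = sum_list (map (\<lambda>s. path_length s + nodes s) ts)"

definition T :: "nat \<Rightarrow> nat \<Rightarrow> nat" where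
  "T t p = card {x. tary t x \<and> x \<noteq> Leaf \<and> path_length x = p}"

definition entropy :: "real \<Rightarrow> real \<Rightarrow> real" where
  "entropy b x = - x * log b x - (1 - x) * log b (1 - x)"

end

theory Submission
  imports Defs "HOL-Real_Asymp.Real_Asymp"
begin


lemma pl_lower:
  assumes "tary t x" "t \<ge> 2"
  shows "real k * real (nodes x) - real k * real t ^ k \<le> real (path_length x)"
  using assms(1)
proof (induction x arbitrary: k)
  case Leaf then show ?case by simp
next
  case (Node ts)
  show ?case
  proof (cases k)
    case 0 then show ?thesis by simp
  next
    case (Suc j)
    have len: "length ts = t" and tar: "\<forall>s\<in>set ts. tary t s" using Node.prems by auto
    have IH: "\<And>s. s \<in> set ts \<Longrightarrow> real j * real (nodes s) - real j * real t ^ j \<le> real (path_length s)"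
      using Node.IH tar by blast
    have "real (path_length (Node ts)) = (\<Sum>s\<leftarrow>ts. real (path_length s) + real (nodes s))"
      by (simp add: sum_list_of_nat[symmetric] o_def)
    also have "\<dots> \<ge> (\<Sum>s\<leftarrow>ts. real (Suc j) * real (nodes s) - real j * real t ^ j)"
      using IH by (intro sum_list_mono) (auto simp: algebra_simps)
    finally have 1: "(\<Sum>s\<leftarrow>ts. real (Suc j) * real (nodes s) - real j * real t ^ j) \<le> real (path_length (Node ts))" .
    have 2: "(\<Sum>s\<leftarrow>ts. real (Suc j) * real (nodes s) - real j * real t ^ j)
          = real (Suc j) * (\<Sum>s\<leftarrow>ts. real (nodes s)) - real t * (real j * real t ^ j)"
      by (simp add: sum_list_subtractf sum_list_const_mult sum_list_triv len)
    have 3: "real (nodes (Node ts)) = 1 + (\<Sum>s\<leftarrow>ts. real (nodes s))"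
      by (simp add: sum_list_of_nat[symmetric] o_def)
    have "Suc j < 2 ^ Suc j" by (rule less_exp)
    also have "(2::nat) ^ Suc j \<le> t ^ Suc j" using assms(2) by (intro power_mono) auto
    finally have 4: "real (Suc j) \<le> real t ^ Suc j" by (metis less_imp_le of_nat_le_iff of_nat_power)
    show ?thesis using 1 2 3 4 unfolding Suc by (simp add: algebra_simps)
  qed
qed

definition U :: "nat \<Rightarrow> nat \<Rightarrow> tree set" where "U t N = {x. tary t x \<and> nodes x \<le> N}"

lemma U_0: "U t 0 = {Leaf}"
  by (auto simp: U_def elim: nodes.elims)

lemma U_Suc_sub: "U t (Suc N) \<subseteq> insert Leaf (Node ` {ts. length ts = t \<and> set ts \<subseteq> U t N})"
proof
  fix x assume "x \<in> U t (Suc N)"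
  then show "x \<in> insert Leaf (Node ` {ts. length ts = t \<and> set ts \<subseteq> U t N})"
  proof (cases x)
    case (Node ts)
    have "\<And>s. s \<in> set ts \<Longrightarrow> nodes s \<le> N"
    proof -
      fix s assume "s \<in> set ts"
      then have "nodes s \<le> sum_list (map nodes ts)" by (simp add: member_le_sum_list)
      then show "nodes s \<le> N" using \<open>x \<in> U t (Suc N)\<close> Node by (simp add: U_def)
    qed
    then show ?thesis using \<open>x \<in> U t (Suc N)\<close> Node by (auto simp: U_def)
  qed simp
qed

lemma finite_U: "finite (U t N)"
proof (induction N)
  case 0 then show ?case by (simp add: U_0)
next
  case (Suc N)
  have "finite {ts. set ts \<subseteq> U t N \<and> length ts = t}" using Suc by (rule finite_lists_length_eq)
  then have "finite (insert Leaf (Node ` {ts. length ts = t \<and> set ts \<subseteq> U t N}))"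
    by (simp add: conj_commute)
  then show ?case using U_Suc_sub finite_subset by blast
qed

lemma sum_lists_prod:
  assumes "finite A"
  shows "(\<Sum>ts\<in>{ts. length ts = k \<and> set ts \<subseteq> A}. prod_list (map (g::_\<Rightarrow>real) ts)) = (sum g A) ^ k"
proof (induction k)
  case 0
  have "{ts. length ts = 0 \<and> set ts \<subseteq> A} = {[]}" by auto
  then show ?case by simp
next
  case (Suc k)
  let ?B = "{ts. length ts = k \<and> set ts \<subseteq> A}"
  have eq: "{ts. length ts = Suc k \<and> set ts \<subseteq> A} = (\<lambda>(a,ts). a#ts) ` (A \<times> ?B)"
  proof
    show "{ts. length ts = Suc k \<and> set ts \<subseteq> A} \<subseteq> (\<lambda>(a,ts). a#ts) ` (A \<times> ?B)"
    proof
      fix ts assume "ts \<in> {ts. length ts = Suc k \<and> set ts \<subseteq> A}"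
      then obtain a us where "ts = a # us" "a \<in> A" "us \<in> ?B" by (cases ts) auto
      then show "ts \<in> (\<lambda>(a,ts). a#ts) ` (A \<times> ?B)" by force
    qed
  qed auto
  have inj: "inj_on (\<lambda>(a,ts). a#ts) (A \<times> ?B)" by (auto simp: inj_on_def)
  have "(\<Sum>ts\<in>{ts. length ts = Suc k \<and> set ts \<subseteq> A}. prod_list (map g ts))
      = (\<Sum>(a,ts)\<in>A \<times> ?B. g a * prod_list (map g ts))"
    unfolding eq by (subst sum.reindex[OF inj]) (simp add: case_prod_beta o_def)
  also have "\<dots> = (\<Sum>a\<in>A. \<Sum>ts\<in>?B. g a * prod_list (map g ts))"
    by (rule sum.cartesian_product[symmetric])
  also have "\<dots> = sum g A * (\<Sum>ts\<in>?B. prod_list (map g ts))"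
    by (simp add: sum_distrib_left sum_distrib_right sum.swap[of _ A])
  also have "\<dots> = sum g A ^ Suc k" using Suc by simp
  finally show ?case .
qed

lemma power_sum_list: "(r::real) ^ sum_list (map f xs) = prod_list (map (\<lambda>x. r ^ f x) xs)"
  by (induction xs) (auto simp: power_add)

lemma U_weight:
  fixes \<rho> \<tau> :: real
  assumes "0 \<le> \<rho>" "1 \<le> \<tau>" "1 + \<rho> * \<tau> ^ t \<le> \<tau>"
  shows "(\<Sum>x\<in>U t N. \<rho> ^ nodes x) \<le> \<tau>"
proof (induction N)
  case 0 then show ?case using assms by (simp add: U_0)
next
  case (Suc N)
  let ?L = "{ts. length ts = t \<and> set ts \<subseteq> U t N}"
  have finL: "finite ?L" using finite_lists_length_eq[OF finite_U[of t N], of t] by (simp add: conj_commute)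
  have "(\<Sum>x\<in>U t (Suc N). \<rho> ^ nodes x) \<le> (\<Sum>x\<in>insert Leaf (Node ` ?L). \<rho> ^ nodes x)"
    using U_Suc_sub finL assms(1) by (intro sum_mono2) auto
  also have "\<dots> = 1 + (\<Sum>x\<in>Node ` ?L. \<rho> ^ nodes x)"
    using finL by (subst sum.insert) auto
  also have "(\<Sum>x\<in>Node ` ?L. \<rho> ^ nodes x) = (\<Sum>ts\<in>?L. \<rho> * prod_list (map (\<lambda>s. \<rho> ^ nodes s) ts))"
    by (subst sum.reindex) (auto simp: inj_on_def power_sum_list)
  also have "\<dots> = \<rho> * (\<Sum>x\<in>U t N. \<rho> ^ nodes x) ^ t"
    by (simp add: sum_distrib_left[symmetric] sum_lists_prod[OF finite_U])
  also have "\<dots> \<le> \<rho> * \<tau> ^ t"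
    using Suc assms by (intro mult_left_mono power_mono) (auto intro: sum_nonneg)
  finally show ?case using assms by linarith
qed

lemma card_U:
  fixes \<rho> \<tau> :: real
  assumes "0 < \<rho>" "\<rho> \<le> 1" "1 \<le> \<tau>" "1 + \<rho> * \<tau> ^ t \<le> \<tau>"
  shows "real (card (U t N)) * \<rho> ^ N \<le> \<tau>"
proof -
  have "real (card (U t N)) * \<rho> ^ N = (\<Sum>x\<in>U t N. \<rho> ^ N)" by simp
  also have "\<dots> \<le> (\<Sum>x\<in>U t N. \<rho> ^ nodes x)"
    using assms by (intro sum_mono power_decreasing) (auto simp: U_def)
  also have "\<dots> \<le> \<tau>" using U_weight assms by auto
  finally show ?thesis .
qed


section \<open>Level-by-level construction\<close>

definition BL :: "nat \<Rightarrow> nat \<Rightarrow> bool list set" where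
  "BL m k = {bs. length bs = m \<and> count_list bs True = k}"

lemma BL_Suc: "BL (Suc m) k = (Cons True) ` {bs. length bs = m \<and> Suc (count_list bs True) = k} \<union> (Cons False) ` BL m k"
proof
  show "BL (Suc m) k \<subseteq> (Cons True) ` {bs. length bs = m \<and> Suc (count_list bs True) = k} \<union> (Cons False) ` BL m k"
  proof
    fix bs assume "bs \<in> BL (Suc m) k"
    then obtain b cs where "bs = b # cs" "length cs = m" by (cases bs) (auto simp: BL_def)
    then show "bs \<in> (Cons True) ` {bs. length bs = m \<and> Suc (count_list bs True) = k} \<union> (Cons False) ` BL m k"
      using \<open>bs \<in> BL (Suc m) k\<close> by (cases b) (auto simp: BL_def)
  qed
qed (auto simp: BL_def)

lemma finite_BL: "finite (BL m k)"
proof -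
  have "BL m k \<subseteq> {bs. set bs \<subseteq> UNIV \<and> length bs = m}" by (auto simp: BL_def)
  moreover have "finite {bs. set bs \<subseteq> (UNIV::bool set) \<and> length bs = m}"
    by (rule finite_lists_length_eq) simp
  ultimately show ?thesis by (rule finite_subset)
qed

lemma card_BL: "card (BL m k) = m choose k"
proof (induction m arbitrary: k)
  case 0
  have "BL 0 k = (if k = 0 then {[]} else {})" by (auto simp: BL_def)
  then show ?case by simp
next
  case (Suc m)
  show ?case
  proof (cases k)
    case 0
    have e0: "{bs. length bs = m \<and> Suc (count_list bs True) = k} = {}" using 0 by auto
    have "BL (Suc m) k = (Cons False) ` BL m k" by (subst BL_Suc) (simp add: e0)
    then show ?thesis using Suc 0 by (simp add: card_image)
  next
    case (Suc j)
    have e: "{bs. length bs = m \<and> Suc (count_list bs True) = k} = BL m j" using Suc by (auto simp: BL_def)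
    have "card (BL (Suc m) k) = card ((Cons True) ` BL m j) + card ((Cons False) ` BL m k)"
      unfolding BL_Suc e by (rule card_Un_disjoint) (auto simp: finite_BL)
    also have "\<dots> = card (BL m j) + card (BL m k)" by (simp add: card_image)
    finally show ?thesis using Suc.IH Suc by simp
  qed
qed

fun fill :: "bool list \<Rightarrow> tree list \<Rightarrow> tree list" where
  "fill [] f = []"
| "fill (False # bs) f = Leaf # fill bs f"
| "fill (True # bs) [] = Leaf # fill bs []"
| "fill (True # bs) (y # f) = y # fill bs f"

lemma length_fill: "length (fill bs f) = length bs"
  by (induction bs f rule: fill.induct) auto

lemma set_fill: "set (fill bs f) \<subseteq> insert Leaf (set f)"
  by (induction bs f rule: fill.induct) auto

lemma sum_fill:
  assumes "g Leaf = 0" "count_list bs True = length f"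
  shows "sum_list (map g (fill bs f)) = (sum_list (map g f) :: nat)"
  using assms(2) by (induction bs f rule: fill.induct) (auto simp: assms(1))

lemma fill_inj:
  assumes "fill bs f = fill bs' f'" "length bs = length bs'"
    "count_list bs True = length f" "count_list bs' True = length f'"
    "Leaf \<notin> set f" "Leaf \<notin> set f'"
  shows "bs = bs' \<and> f = f'"
  using assms
proof (induction bs f arbitrary: bs' f' rule: fill.induct)
  case (1 f)
  then show ?case by auto
next
  case (2 bs f)
  then obtain b cs where bs': "bs' = b # cs" by (cases bs') auto
  show ?case
  proof (cases b)
    case True
    then obtain y g where "f' = y # g" using 2 bs' by (cases f') auto
    then show ?thesis using 2 bs' True by auto
  next
    case False
    then show ?thesis using 2 bs' by auto
  qed
next
  case (3 bs)
  then show ?case by auto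
next
  case (4 bs y f)
  then obtain b cs where bs': "bs' = b # cs" by (cases bs') auto
  show ?case
  proof (cases b)
    case True
    then obtain z g where "f' = z # g" using 4 bs' by (cases f') auto
    then show ?thesis using 4 bs' True by auto
  next
    case False
    then show ?thesis using 4 bs' by auto
  qed
qed

fun chunks :: "nat \<Rightarrow> nat \<Rightarrow> 'a list \<Rightarrow> 'a list list" where
  "chunks t 0 xs = []"
| "chunks t (Suc m) xs = take t xs # chunks t m (drop t xs)"

lemma chunks_props:
  assumes "length xs = t * m"
  shows "length (chunks t m xs) = m \<and> (\<forall>c\<in>set (chunks t m xs). length c = t) \<and> concat (chunks t m xs) = xs"
  using assms
proof (induction m arbitrary: xs)
  case (Suc m)
  have "length (drop t xs) = t * m" using Suc.prems by simp
  note IH = Suc.IH[OF this]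
  show ?case using IH Suc.prems by simp
qed simp

definition nxt :: "nat list \<Rightarrow> nat" where "nxt ns = (case ns of [] \<Rightarrow> 0 | n # _ \<Rightarrow> n)"

lemma nxt_simps[simp]: "nxt [] = 0" "nxt (n # ns) = n" by (auto simp: nxt_def)

fun Forests :: "nat \<Rightarrow> nat list \<Rightarrow> tree list set" where
  "Forests t [] = {[]}"
| "Forests t (n # ns) = (\<lambda>(bs, f). map Node (chunks t n (fill bs f))) ` (BL (t * n) (nxt ns) \<times> Forests t ns)"

fun wpl :: "nat list \<Rightarrow> nat" where
  "wpl [] = 0"
| "wpl (n # ns) = sum_list ns + wpl ns"

fun bprod :: "nat \<Rightarrow> nat list \<Rightarrow> nat" where
  "bprod t [] = 1"
| "bprod t (n # ns) = (t * n choose nxt ns) * bprod t ns"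

lemma sum_list_Suc: "sum_list (map (\<lambda>c. Suc (g c)) cs) = length cs + sum_list (map g cs)"
  by (induction cs) auto

lemma sum_list_concat_map: "sum_list (map g (concat cs)) = sum_list (map (\<lambda>c. sum_list (map g c)) cs)"
  by (induction cs) auto

lemma Forests_props:
  assumes "f \<in> Forests t ns"
  shows "length f = nxt ns \<and> (\<forall>y\<in>set f. tary t y \<and> y \<noteq> Leaf)
     \<and> sum_list (map nodes f) = sum_list ns \<and> sum_list (map path_length f) = wpl ns"
  using assms
proof (induction ns arbitrary: f)
  case Nil then show ?case by simp
next
  case (Cons n ns)
  then obtain bs g where f: "f = map Node (chunks t n (fill bs g))" and bs: "bs \<in> BL (t * n) (nxt ns)"
    and g: "g \<in> Forests t ns" by auto
  note IH = Cons.IH[OF g]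
  have lf: "length (fill bs g) = t * n" using bs by (simp add: BL_def length_fill)
  note ch = chunks_props[OF lf]
  have cnt: "count_list bs True = length g" using bs IH by (simp add: BL_def)
  have sf: "\<forall>y\<in>set (fill bs g). tary t y" using set_fill[of bs g] IH by auto
  have "length f = n" using f ch by simp
  moreover have "\<forall>y\<in>set f. tary t y \<and> y \<noteq> Leaf"
  proof
    fix y assume "y \<in> set f"
    then obtain c where "c \<in> set (chunks t n (fill bs g))" "y = Node c" using f by auto
    moreover then have "set c \<subseteq> set (concat (chunks t n (fill bs g)))" by auto
    then have "set c \<subseteq> set (fill bs g)" using ch by simp
    ultimately show "tary t y \<and> y \<noteq> Leaf" using ch sf \<open>set c \<subseteq> set (fill bs g)\<close> by auto
  qed
  moreover have "sum_list (map nodes f) = n + sum_list (map nodes (fill bs g))"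
  proof -
    have "sum_list (map nodes f) = sum_list (map (\<lambda>c. 1 + sum_list (map nodes c)) (chunks t n (fill bs g)))"
      using f by (simp add: o_def)
    also have "\<dots> = n + sum_list (map (\<lambda>c. sum_list (map nodes c)) (chunks t n (fill bs g)))"
      using ch by (simp add: sum_list_Suc)
    also have "\<dots> = n + sum_list (map nodes (fill bs g))"
      using ch by (metis sum_list_concat_map)
    finally show ?thesis .
  qed
  moreover have "sum_list (map path_length f) = sum_list (map (\<lambda>s. path_length s + nodes s) (fill bs g))"
  proof -
    have "sum_list (map path_length f) = sum_list (map (\<lambda>c. sum_list (map (\<lambda>s. path_length s + nodes s) c)) (chunks t n (fill bs g)))"
      using f by (simp add: o_def)
    also have "\<dots> = sum_list (map (\<lambda>s. path_length s + nodes s) (fill bs g))"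
      using ch by (metis sum_list_concat_map)
    finally show ?thesis .
  qed
  moreover have "sum_list (map nodes (fill bs g)) = sum_list (map nodes g)"
    by (rule sum_fill[OF _ cnt]) simp
  moreover have "sum_list (map (\<lambda>s. path_length s + nodes s) (fill bs g)) = sum_list (map (\<lambda>s. path_length s + nodes s) g)"
    by (rule sum_fill[OF _ cnt]) simp
  ultimately show ?case using IH by (simp add: sum_list_addf)
qed

lemma card_Forests: "card (Forests t ns) = bprod t ns"
proof (induction ns)
  case Nil then show ?case by simp
next
  case (Cons n ns)
  have inj: "inj_on (\<lambda>(bs, f). map Node (chunks t n (fill bs f))) (BL (t * n) (nxt ns) \<times> Forests t ns)"
  proof (rule inj_onI, clarify)
    fix bs f bs' f'
    assume A: "bs \<in> BL (t * n) (nxt ns)" "f \<in> Forests t ns" "bs' \<in> BL (t * n) (nxt ns)" "f' \<in> Forests t ns"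
      and eq: "map Node (chunks t n (fill bs f)) = map Node (chunks t n (fill bs' f'))"
    have "chunks t n (fill bs f) = chunks t n (fill bs' f')"
      using eq by (simp add: inj_map_eq_map inj_on_def)
    moreover have "length (fill bs f) = t * n" "length (fill bs' f') = t * n"
      using A by (auto simp: BL_def length_fill)
    ultimately have "fill bs f = fill bs' f'" using chunks_props by metis
    then show "bs = bs' \<and> f = f'"
      using A Forests_props[OF A(2)] Forests_props[OF A(4)]
      by (intro fill_inj) (auto simp: BL_def)
  qed
  show ?case using Cons
    by (simp add: card_image[OF inj] card_cartesian_product card_BL)
qed


section \<open>Binomial lower bound\<close>

lemma binom_ratio: "i < m \<Longrightarrow> Suc i * (m choose Suc i) = (m - i) * (m choose i)"
  using binomial_absorption[of i m] binomial_absorb_comp[of m i] by simp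

lemma binom_central_lower:
  assumes "t \<ge> 2"
  shows "t ^ (t * W) \<le> (t * W + 1) * ((t * W choose W) * (t - 1) ^ (t * W - W))"
proof -
  define m where "m = t * W"
  define a where "a i = (m choose i) * (t - 1) ^ (m - i)" for i
  have step: "a (Suc i) * (Suc i * (t - 1)) = a i * (m - i)" if "i < m" for i
  proof -
    have "m - i = Suc (m - Suc i)" using that by simp
    then have "(t - 1) ^ (m - i) = (t - 1) * (t - 1) ^ (m - Suc i)" by simp
    then show ?thesis unfolding a_def using binom_ratio[OF that]
      by (metis (no_types, lifting) mult.assoc mult.commute mult.left_commute)
  qed
  have up: "a i \<le> a (Suc i)" if "i < W" for i
  proof -
    have im: "i < m" using that assms unfolding m_def by (metis le_less_trans less_le_trans mult_le_mono1 nat_mult_1 one_le_numeral le_refl)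
    have "(Suc i) * (t - 1) \<le> m - i"
    proof -
      have "Suc i * (t - 1) + i = t * Suc i - 1" using assms by (cases t) (auto simp: algebra_simps)
      also have "\<dots> \<le> t * W - 1" using that by (intro diff_le_mono mult_le_mono2) simp
      finally show ?thesis unfolding m_def by linarith
    qed
    then have "a i * (Suc i * (t - 1)) \<le> a i * (m - i)" by (rule mult_le_mono2)
    also have "\<dots> = a (Suc i) * (Suc i * (t - 1))" using step[OF im] by simp
    finally show ?thesis using assms by (simp del: mult_Suc)
  qed
  have down: "a (Suc i) \<le> a i" if "W \<le> i" "i < m" for i
  proof -
    have "m - i \<le> (Suc i) * (t - 1)"
    proof -
      have "m \<le> t * i" using that(1) unfolding m_def by simp
      then have "m - i \<le> t * i - i" by simp
      also have "t * i - i = i * (t - 1)" by (simp add: algebra_simps diff_mult_distrib)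
      also have "\<dots> \<le> Suc i * (t - 1)" by simp
      finally show ?thesis .
    qed
    then have "a (Suc i) * (m - i) \<le> a (Suc i) * (Suc i * (t - 1))" by (rule mult_le_mono2)
    also have "\<dots> = a i * (m - i)" using step[OF that(2)] by simp
    finally show ?thesis using that by simp
  qed
  have le1: "a i \<le> a W" if "i \<le> W" for i
    using that
  proof (induction "W - i" arbitrary: i)
    case 0 then show ?case by simp
  next
    case (Suc d)
    then have "a (Suc i) \<le> a W" by simp
    moreover have "a i \<le> a (Suc i)" using up Suc by simp
    ultimately show ?case by simp
  qed
  have le2: "a i \<le> a W" if "W \<le> i" "i \<le> m" for i
    using that
  proof (induction i rule: dec_induct)
    case base then show ?case by simp
  next
    case (step i)
    then show ?case using down[of i] by simp
  qed
  have Wm: "W \<le> m" using assms unfolding m_def by simp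
  have all: "a i \<le> a W" if "i \<le> m" for i
    using le1 le2 that by (cases "i \<le> W") auto
  have "t ^ m = (1 + (t - 1)) ^ m" using assms by simp
  also have "\<dots> = (\<Sum>i\<le>m. a i)" unfolding binomial a_def by simp
  also have "\<dots> \<le> (\<Sum>i\<le>m. a W)" using all by (intro sum_mono) auto
  also have "\<dots> = (m + 1) * a W" by simp
  finally show ?thesis unfolding a_def m_def by simp
qed




lemma T_set_sub:
  assumes "t \<ge> 2" "k \<ge> 1" "real p / real k + real t ^ k \<le> real N"
  shows "{x. tary t x \<and> x \<noteq> Leaf \<and> path_length x = p} \<subseteq> U t N"
proof
  fix x assume x: "x \<in> {x. tary t x \<and> x \<noteq> Leaf \<and> path_length x = p}"
  have "real k * real (nodes x) - real k * real t ^ k \<le> real p"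
    using pl_lower[of t x k] x assms by auto
  then have "real k * real (nodes x) \<le> real k * (real p / real k + real t ^ k)"
    using assms by (simp add: algebra_simps)
  then have "real (nodes x) \<le> real p / real k + real t ^ k"
    using assms by (simp add: mult_le_cancel_left)
  then have "nodes x \<le> N" using assms by linarith
  then show "x \<in> U t N" using x by (simp add: U_def)
qed

lemma finite_Tset:
  assumes "t \<ge> 2"
  shows "finite {x. tary t x \<and> x \<noteq> Leaf \<and> path_length x = p}"
proof -
  have "{x. tary t x \<and> x \<noteq> Leaf \<and> path_length x = p} \<subseteq> U t (p + t)"
    using assms by (intro T_set_sub[of t 1]) auto
  then show ?thesis using finite_U finite_subset by blast
qed

lemma T_upper:
  fixes \<rho> \<tau> :: real
  assumes "t \<ge> 2" "k \<ge> 1" "real p / real k + real t ^ k \<le> real N"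
    "0 < \<rho>" "\<rho> \<le> 1" "1 \<le> \<tau>" "1 + \<rho> * \<tau> ^ t \<le> \<tau>"
  shows "real (T t p) * \<rho> ^ N \<le> \<tau>"
proof -
  have "T t p \<le> card (U t N)" unfolding T_def
    using T_set_sub[OF assms(1-3)] finite_U by (rule card_mono[rotated])
  then have "real (T t p) * \<rho> ^ N \<le> real (card (U t N)) * \<rho> ^ N"
    using assms by (intro mult_right_mono) auto
  also have "\<dots> \<le> \<tau>" using card_U assms by blast
  finally show ?thesis .
qed

lemma T_lower:
  assumes "t \<ge> 2"
  shows "bprod t (1 # ns) \<le> T t (wpl (1 # ns))"
proof -
  let ?S = "{x. tary t x \<and> x \<noteq> Leaf \<and> path_length x = wpl (1 # ns)}"
  have "hd ` Forests t (1 # ns) \<subseteq> ?S"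
  proof
    fix y assume "y \<in> hd ` Forests t (1 # ns)"
    then obtain f where f: "f \<in> Forests t (1 # ns)" "y = hd f" by auto
    note P = Forests_props[OF f(1)]
    then obtain z where z: "f = [z]" by (cases f) auto
    have "tary t z \<and> z \<noteq> Leaf" using P z by simp
    moreover have "path_length z = wpl (1 # ns)" using P z by simp
    ultimately show "y \<in> ?S" using f z by simp
  qed
  moreover have "inj_on hd (Forests t (1 # ns))"
  proof (rule inj_onI)
    fix f g assume "f \<in> Forests t (1 # ns)" "g \<in> Forests t (1 # ns)" "hd f = hd g"
    moreover then have "length f = 1" "length g = 1" using Forests_props by auto
    ultimately show "f = g" by (cases f; cases g) auto
  qed
  ultimately have "card (Forests t (1 # ns)) \<le> card ?S"
    using finite_Tset[OF assms] by (metis card_image card_mono)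
  then show ?thesis unfolding T_def by (simp only: card_Forests)
qed

section \<open>Profiles\<close>

lemma wpl_append: "wpl (xs @ ys) = wpl xs + wpl ys + length xs * sum_list ys"
  by (induction xs) (auto simp: algebra_simps)

lemma wpl_le: "wpl xs \<le> length xs * sum_list xs"
proof (induction xs)
  case (Cons x xs)
  have "wpl (x # xs) = sum_list xs + wpl xs" by simp
  also have "\<dots> \<le> sum_list xs + length xs * sum_list xs" using Cons by simp
  also have "\<dots> = Suc (length xs) * sum_list xs" by simp
  also have "\<dots> \<le> Suc (length xs) * (x + sum_list xs)" by (intro mult_le_mono2) simp
  finally show ?case by simp
qed simp

fun adm :: "nat \<Rightarrow> nat list \<Rightarrow> bool" where
  "adm t (n # m # ns) = (m \<le> t * n \<and> adm t (m # ns))"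
| "adm t _ = True"

lemma adm_Cons: "adm t (x # zs) \<Longrightarrow> nxt zs \<le> t * x \<and> adm t zs"
  by (cases zs) auto

lemma bprod_ge1: "adm t ns \<Longrightarrow> 1 \<le> bprod t ns"
proof (induction ns)
  case (Cons x zs)
  then have "nxt zs \<le> t * x" "adm t zs" using adm_Cons by auto
  then show ?case using Cons by (simp add: Suc_le_eq)
qed simp

lemma bprod_append: "adm t (xs @ ys) \<Longrightarrow> bprod t ys \<le> bprod t (xs @ ys)"
proof (induction xs)
  case (Cons x xs)
  then have "nxt (xs @ ys) \<le> t * x" "adm t (xs @ ys)" using adm_Cons[of t x "xs @ ys"] by auto
  then have "1 \<le> t * x choose nxt (xs @ ys)" by (simp add: Suc_le_eq)
  have "bprod t ys \<le> bprod t (xs @ ys)" using Cons.IH \<open>adm t (xs @ ys)\<close> by simp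
  also have "\<dots> \<le> (t * x choose nxt (xs @ ys)) * bprod t (xs @ ys)"
    using mult_le_mono1[OF \<open>1 \<le> t * x choose nxt (xs @ ys)\<close>, of "bprod t (xs @ ys)"] by simp
  also have "\<dots> = bprod t ((x # xs) @ ys)" by simp
  finally show ?case .
qed simp

lemma bprod_rep: "adm t (replicate (Suc L) W @ zs) \<Longrightarrow> (t * W choose W) ^ L \<le> bprod t (replicate (Suc L) W @ zs)"
proof (induction L)
  case 0
  then have "adm t (W # zs)" by simp
  from bprod_ge1[OF this] show ?case by simp
next
  case (Suc L)
  have "adm t (replicate (Suc L) W @ zs)" using Suc.prems by simp
  then show ?case using Suc by simp
qed

lemma adm_append: "adm t xs \<Longrightarrow> adm t ys \<Longrightarrow> (xs \<noteq> [] \<Longrightarrow> ys \<noteq> [] \<Longrightarrow> hd ys \<le> t * last xs) \<Longrightarrow> adm t (xs @ ys)"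
proof (induction xs rule: adm.induct)
  case (1 t n m ns)
  then show ?case by auto
next
  case ("2_1" t) then show ?case by simp
next
  case ("2_2" t v)
  then show ?case by (cases ys) auto
qed

definition topl :: "nat \<Rightarrow> nat \<Rightarrow> nat list" where "topl t D = map (\<lambda>j. t ^ j) [0..<D]"

lemma topl_Suc: "topl t (Suc D) = topl t D @ [t ^ D]" by (simp add: topl_def)

lemma adm_topl: "adm t (topl t D)"
proof (induction D)
  case 0 then show ?case by (simp add: topl_def)
next
  case (Suc D)
  show ?case unfolding topl_Suc
  proof (rule adm_append[OF Suc])
    assume "topl t D \<noteq> []"
    then have "last (topl t D) = t ^ (D - 1)" "D \<ge> 1" by (auto simp: topl_def last_map)
    then show "hd [t ^ D] \<le> t * last (topl t D)" by (simp add: power_eq_if)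
  qed simp
qed

lemma sum_topl: "t \<ge> 2 \<Longrightarrow> sum_list (topl t D) < t ^ D"
proof (induction D)
  case 0 then show ?case by (simp add: topl_def)
next
  case (Suc D)
  have "sum_list (topl t (Suc D)) = sum_list (topl t D) + t ^ D" by (simp add: topl_Suc)
  also have "\<dots> < t ^ D + t ^ D" using Suc by simp
  also have "\<dots> \<le> t * t ^ D" using Suc.prems by (metis mult_2 mult_le_mono1)
  finally show ?case by simp
qed

lemma length_topl[simp]: "length (topl t D) = D" by (simp add: topl_def)

lemma topl_hd: "D \<ge> 1 \<Longrightarrow> topl t D = 1 # tl (topl t D)"
  by (cases D) (auto simp: topl_def upt_rec)

definition body :: "nat \<Rightarrow> nat \<Rightarrow> nat \<Rightarrow> nat list" where
  "body t D L = topl t D @ replicate (Suc L) (t ^ D)"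

lemma body_Suc: "body t D (Suc L) = body t D L @ [t ^ D]"
  by (simp add: body_def replicate_append_same[symmetric])

lemma length_body: "length (body t D L) = D + L + 1" by (simp add: body_def)

lemma wpl_body_Suc: "wpl (body t D (Suc L)) = wpl (body t D L) + (D + L + 1) * t ^ D"
  by (simp only: body_Suc wpl_append length_body) simp

lemma wpl_body_ge: "D * L * t ^ D \<le> wpl (body t D L)"
proof -
  have "D * L * t ^ D \<le> D * sum_list (replicate (Suc L) (t ^ D))" by (simp add: sum_list_replicate)
  also have "\<dots> \<le> wpl (body t D L)" by (simp add: body_def wpl_append)
  finally show ?thesis .
qed

lemma wpl_body_le: "t \<ge> 2 \<Longrightarrow> wpl (body t D L) \<le> (D + L + 1) * ((L + 2) * t ^ D)"
proof -
  assume t: "t \<ge> 2"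
  have "wpl (body t D L) \<le> length (body t D L) * sum_list (body t D L)" by (rule wpl_le)
  also have "sum_list (body t D L) \<le> (L + 2) * t ^ D"
    using sum_topl[OF t, of D] by (simp add: body_def sum_list_replicate)
  then have "length (body t D L) * sum_list (body t D L) \<le> (D + L + 1) * ((L + 2) * t ^ D)"
    unfolding length_body by (rule mult_le_mono2)
  finally show ?thesis .
qed

lemma exists_crossing:
  fixes f :: "nat \<Rightarrow> nat"
  assumes "f 0 \<le> p" "\<And>L. L \<le> f L"
  shows "\<exists>L. f L \<le> p \<and> p < f (Suc L)"
proof (rule ccontr)
  assume "\<not> ?thesis"
  then have "\<And>L. f L \<le> p \<Longrightarrow> f (Suc L) \<le> p" by (simp add: not_less)
  then have fl: "f L \<le> p" for L
  proof (induction L)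
    case 0 show ?case using assms(1) .
  next
    case (Suc L) then show ?case by blast
  qed
  have "Suc p \<le> f (Suc p)" by (rule assms(2))
  then show False using fl[of "Suc p"] by linarith
qed


lemma adm_replicate: "t \<ge> 1 \<Longrightarrow> adm t (replicate n W)"
proof (induction n)
  case (Suc n)
  then show ?case by (cases n) auto
qed simp

lemma profile_exists:
  assumes t: "t \<ge> 2" and D: "D \<ge> 1"
    and p0: "(D + 1) * (2 * t ^ D) + 2 * (D + 1)^2 \<le> p"
    and big: "\<And>L. D * L * t ^ D \<le> p \<Longrightarrow> 8 * (D + L + 1) \<le> t ^ D"
  shows "\<exists>L. D * L * t ^ D \<le> p \<and> p < (D + L + 2) * ((L + 3) * t ^ D) + 2 * (D + L + 3)^2
            \<and> (t * t ^ D choose t ^ D) ^ L \<le> T t p"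
proof -
  define W where "W = t ^ D"
  define f where "f L = wpl (body t D L) + 2 * (D + L + 1)^2" for L
  have "f 0 \<le> p" using wpl_body_le[OF t, of D 0] p0 unfolding f_def by (simp only: add_0_right add_0_left)
  moreover have "L \<le> f L" for L
  proof -
    have "L \<le> (D + L + 1)" by simp
    also have "\<dots> \<le> (D + L + 1)^2" by (simp add: power2_eq_square)
    finally show ?thesis unfolding f_def by simp
  qed
  ultimately obtain L where L1: "f L \<le> p" and L2: "p < f (Suc L)" using exists_crossing by blast
  define d where "d = D + L + 1"
  have d1: "d \<ge> 1" unfolding d_def by simp
  have A: "D * L * W \<le> p" using wpl_body_ge[of D L t] L1 unfolding f_def W_def by simp
  have B: "p < (D + L + 2) * ((L + 3) * W) + 2 * (D + L + 3)^2"
  proof -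
    have 1: "p < wpl (body t D (Suc L)) + 2 * (D + Suc L + 1)^2" using L2 unfolding f_def by simp
    have e: "D + Suc L + 1 = D + L + 2" "Suc L + 2 = L + 3" by simp_all
    have 2: "wpl (body t D (Suc L)) \<le> (D + L + 2) * ((L + 3) * W)"
      using wpl_body_le[OF t, of D "Suc L"] unfolding W_def e .
    have 3: "2 * (D + Suc L + 1)^2 \<le> 2 * (D + L + 3)^2" by (intro mult_le_mono2 power_mono) auto
    show ?thesis using 1 2 3 by linarith
  qed
  have bigW: "8 * d \<le> W" using big[OF A[unfolded W_def]] unfolding d_def W_def .
  define R where "R = p - wpl (body t D L)"
  have L1': "wpl (body t D L) + 2 * d * d \<le> p" using L1 unfolding f_def d_def power2_eq_square by (simp add: algebra_simps)
  have L2': "p < wpl (body t D L) + W * d + 2 * (d + 1) * (d + 1)"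
    using L2 unfolding f_def d_def W_def wpl_body_Suc power2_eq_square by (simp add: algebra_simps)
  have R1: "2 * d * d \<le> R" unfolding R_def using L1' by linarith
  have R2: "R < W * d + 2 * (d + 1) * (d + 1)" unfolding R_def using L1' L2' by linarith
  have "d + 1 \<le> 2 * d" using d1 by linarith
  then have "(d + 1) * (d + 1) \<le> (2 * d) * (2 * d)" by (intro mult_le_mono)
  then have "2 * (d + 1) * (d + 1) \<le> 8 * d * d" by simp
  also have "\<dots> \<le> W * d" using mult_le_mono1[OF bigW, of d] by simp
  finally have R3: "R < 2 * W * d" using R2 by linarith
  define q where "q = R div d"
  define r where "r = R mod d"
  have q1: "2 * d \<le> q"
  proof -
    have "(2 * d * d) div d \<le> R div d" by (rule div_le_mono[OF R1])
    moreover have "(2 * d * d) div d = 2 * d" using d1 by simp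
    ultimately show ?thesis unfolding q_def by simp
  qed
  have q2: "q < 2 * W" unfolding q_def using R3 d1 div_less_iff_less_mult[of d R "2 * W"] by simp
  have r1: "r < d" unfolding r_def using d1 by simp
  have Rqr: "R = q * d + r" unfolding q_def r_def by simp
  define a where "a = q - r"
  define b where "b = r"
  have ab: "a * d + b * (d + 1) = R" unfolding a_def b_def using Rqr q1 r1
    by (simp add: algebra_simps diff_mult_distrib)
  have "a \<le> q" by (simp add: a_def)
  moreover have "2 * W \<le> t * W" using t by (rule mult_le_mono1)
  ultimately have a1: "a \<le> t * W" using q2 by linarith
  have "d \<le> a" unfolding a_def using q1 r1 by linarith
  moreover have "1 * a \<le> t * a" using t by (intro mult_le_mono1) simp
  ultimately have b1: "b \<le> t * a" unfolding b_def using r1 by linarith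
  define ns where "ns = body t D L @ [a, b]"
  obtain xs where "topl t D = 1 # xs" using topl_hd[OF D] by blast
  then have ns1: "ns = 1 # tl ns" by (simp add: ns_def body_def)
  have wpl_ns: "wpl ns = p"
  proof -
    have "wpl ns = wpl (body t D L) + b + d * (a + b)" unfolding ns_def wpl_append length_body d_def by simp
    also have "\<dots> = wpl (body t D L) + R" using ab by (simp add: algebra_simps)
    also have "\<dots> = p" using L1 unfolding R_def f_def by simp
    finally show ?thesis .
  qed
  have admb: "adm t (body t D L)" unfolding body_def
  proof (rule adm_append[OF adm_topl adm_replicate])
    show "1 \<le> t" using t by simp
    assume "topl t D \<noteq> []"
    then have "last (topl t D) = t ^ (D - 1)" by (auto simp: topl_def last_map)
    then show "hd (replicate (Suc L) (t ^ D)) \<le> t * last (topl t D)" using D by (simp add: power_eq_if)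
  qed
  have adm_ns: "adm t ns" unfolding ns_def
  proof (rule adm_append[OF admb])
    show "adm t [a, b]" using b1 by simp
    show "hd [a, b] \<le> t * last (body t D L)" using a1 unfolding body_def W_def by simp
  qed
  have "(t * W choose W) ^ L \<le> bprod t (replicate (Suc L) W @ [a, b])"
  proof (rule bprod_rep)
    show "adm t (replicate (Suc L) W @ [a, b])"
    proof (rule adm_append[OF adm_replicate])
      show "1 \<le> t" using t by simp
      show "adm t [a, b]" using b1 by simp
      show "hd [a, b] \<le> t * last (replicate (Suc L) W)" using a1 by simp
    qed
  qed
  also have "\<dots> \<le> bprod t ns"
    using bprod_append[of t "topl t D" "replicate (Suc L) W @ [a, b]"] adm_ns
    unfolding ns_def body_def W_def by simp
  also have "\<dots> \<le> T t p"
  proof -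
    have "bprod t (1 # tl ns) \<le> T t (wpl (1 # tl ns))" by (rule T_lower[OF t])
    then show ?thesis by (simp only: ns1[symmetric] wpl_ns)
  qed
  finally show ?thesis using A B unfolding W_def by blast
qed



lemma pow_le_from_log:
  fixes a z :: real
  assumes "1 < a" "0 < z" "real n \<le> ln z / ln a"
  shows "a ^ n \<le> z"
proof -
  have "ln (a ^ n) = real n * ln a" by (simp add: ln_realpow)
  also have "\<dots> \<le> ln z" using assms by (simp add: le_divide_eq)
  finally show ?thesis using assms by (subst (asm) ln_le_cancel_iff) auto
qed

lemma pow_gt_from_log:
  fixes a z :: real
  assumes "1 < a" "0 < z" "ln z / ln a < real n"
  shows "z < a ^ n"
proof -
  have "ln z < real n * ln a" using assms by (simp add: divide_less_eq)
  also have "\<dots> = ln (a ^ n)" by (simp add: ln_realpow)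
  finally show ?thesis using assms by (subst (asm) ln_less_cancel_iff) auto
qed

lemma K_pos:
  assumes "t \<ge> (2::nat)"
  shows "0 < real t * ln (real t) - (real t - 1) * ln (real t - 1)"
proof -
  have "ln (real t - 1) \<le> ln (real t)" using assms by (subst ln_le_cancel_iff) auto
  then have "(real t - 1) * ln (real t - 1) \<le> (real t - 1) * ln (real t)"
    using assms by (intro mult_left_mono) auto
  moreover have "0 < ln (real t)" using assms by simp
  ultimately show ?thesis by (simp add: algebra_simps)
qed

lemma ln_binom_lower:
  assumes t: "t \<ge> (2::nat)"
  shows "(real t * ln (real t) - (real t - 1) * ln (real t - 1)) * real W - ln (real t * real W + 1)
          \<le> ln (real (t * W choose W))"
proof -
  define C where "C = t * W choose W"
  have nat: "t ^ (t * W) \<le> (t * W + 1) * (C * (t - 1) ^ (t * W - W))"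
    using binom_central_lower[OF t] unfolding C_def .
  have tm1: "real (t - 1) = real t - 1" using t by simp
  have tmW: "real (t * W - W) = (real t - 1) * real W" using t by (simp add: of_nat_diff algebra_simps)
  have pos1: "0 < real t * real W + 1" by (simp add: add_nonneg_pos)
  have pos3: "0 < (real t - 1) ^ (t * W - W)" using t by simp
  have "C \<noteq> 0" using nat t by (metis mult_is_0 mult_0_right not_one_le_zero one_le_power le_trans Suc_1 Suc_le_eq less_le_trans less_one numeral_le_iff one_le_numeral)
  then have pos2: "0 < real C" by simp
  have "real t ^ (t * W) \<le> (real t * real W + 1) * (real C * (real t - 1) ^ (t * W - W))"
    using nat unfolding tm1[symmetric] by (metis (mono_tags) of_nat_1 of_nat_add of_nat_le_iff of_nat_mult of_nat_power)
  then have "ln (real t ^ (t * W)) \<le> ln ((real t * real W + 1) * (real C * (real t - 1) ^ (t * W - W)))"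
    using t pos1 pos2 pos3 by (subst ln_le_cancel_iff) auto
  also have "\<dots> = ln (real t * real W + 1) + ln (real C) + real (t * W - W) * ln (real t - 1)"
    using pos1 pos2 pos3 by (simp add: ln_mult ln_realpow)
  finally have "real (t * W) * ln (real t) \<le> ln (real t * real W + 1) + ln (real C) + (real t - 1) * real W * ln (real t - 1)"
    by (simp add: ln_realpow tmW)
  then show ?thesis unfolding C_def[symmetric] by (simp add: algebra_simps)
qed


lemma lower_T:
  fixes t p :: nat and x c K s y \<Lambda> :: real
  defines "x \<equiv> real p"
  defines "c \<equiv> ln (real t)"
  defines "K \<equiv> real t * ln (real t) - (real t - 1) * ln (real t - 1)"
  defines "s \<equiv> ln x * sqrt (ln x)"
  defines "y \<equiv> ln (x / s) / c"
  defines "\<Lambda> \<equiv> real t * s / (y - 1)"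
  assumes t: "t \<ge> 2" and x3: "x \<ge> 4" and H2: "y \<ge> 2"
    and H3: "(y + 1) * 2 * x / s + 2 * (y + 1)^2 \<le> x"
    and H4: "8 * (y + \<Lambda> + 1) \<le> x / (real t * s)"
  shows "1 \<le> T t p \<and> K * (x / (y + \<Lambda> + 2) - 2 * (y + \<Lambda> + 3)^2 - 3 * x / s) - \<Lambda> * ln (real t * x + 1) \<le> ln (real (T t p))"
proof -
  have t1: "1 < real t" using t by simp
  have c0: "0 < c" unfolding c_def using t by simp
  have K0: "0 < K" unfolding K_def using K_pos[OF t] .
  have l1: "1 < ln x"
  proof -
    have "exp 1 < x" using x3 exp_le by linarith
    then show ?thesis using x3 by (metis exp_gt_zero ln_exp ln_less_cancel_iff less_le_trans zero_less_numeral less_trans)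
  qed
  have s1: "1 < s" unfolding s_def using l1 by (metis real_sqrt_gt_1_iff le_less_trans less_le mult_le_cancel_right1 mult_less_cancel_left1 not_le zero_less_one)
  have x0: "0 < x" using x3 by simp
  have xs0: "0 < x / s" using x0 s1 by simp
  have xs_le: "x / s \<le> x" using x0 s1 by (simp add: divide_le_eq)
  define D where "D = nat \<lfloor>y\<rfloor>"
  have Dy: "real D \<le> y" "y < real D + 1" using H2 unfolding D_def by linarith+
  have D1: "D \<ge> 1" using H2 unfolding D_def by linarith
  define W where "W = t ^ D"
  have rW: "real W = real t ^ D" unfolding W_def by simp
  have W_le: "real W \<le> x / s" unfolding rW
    by (rule pow_le_from_log[OF t1 xs0]) (use Dy in \<open>simp add: y_def c_def\<close>)
  have W_gt: "x / (real t * s) < real W"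
  proof -
    have "x / s < real t ^ (D + 1)"
      by (rule pow_gt_from_log[OF t1 xs0]) (use Dy in \<open>simp add: y_def c_def\<close>)
    then have "x / s < real t * real W" by (simp add: rW)
    then show ?thesis using t1 s1 by (simp add: field_simps)
  qed
  have W0: "0 < real W" using rW t1 by simp
  have ym1: "1 \<le> y - 1" using H2 by simp
  have Lam: "real L \<le> \<Lambda>" if "D * L * W \<le> p" for L
  proof -
    have a: "real D * real L * real W \<le> x" using that unfolding x_def by (metis of_nat_le_iff of_nat_mult)
    have "(y - 1) * (x / (real t * s)) \<le> real D * real W"
      using Dy W_gt ym1 x0 s1 t1 by (intro mult_mono) auto
    then have "real L * ((y - 1) * (x / (real t * s))) \<le> real L * (real D * real W)"
      by (intro mult_left_mono) auto
    also have "\<dots> \<le> x" using a by (simp add: algebra_simps)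
    finally have "real L * ((y - 1) * (x / (real t * s))) \<le> x" .
    moreover have A0: "0 < (y - 1) * (x / (real t * s))" using ym1 x0 s1 t1 by simp
    ultimately have "real L \<le> x / ((y - 1) * (x / (real t * s)))"
      by (subst pos_le_divide_eq[OF A0])
    also have "\<dots> = \<Lambda>" unfolding \<Lambda>_def using x0 s1 t1 ym1 by (simp add: field_simps)
    finally show ?thesis .
  qed
  have c1: "(D + 1) * (2 * t ^ D) + 2 * (D + 1)^2 \<le> p"
  proof -
    have "(real D + 1) * (2 * real W) \<le> (y + 1) * (2 * (x / s))"
      using Dy W_le W0 by (intro mult_mono) auto
    moreover have "(real D + 1)^2 \<le> (y + 1)^2" using Dy by (intro power_mono) auto
    ultimately have "(real D + 1) * (2 * real W) + 2 * (real D + 1)^2 \<le> x"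
      using H3 by (simp add: field_simps)
    then have "real ((D + 1) * (2 * W) + 2 * (D + 1)^2) \<le> real p" unfolding x_def by (simp add: algebra_simps)
    then show ?thesis unfolding W_def by (simp only: of_nat_le_iff)
  qed
  have big: "8 * (D + L + 1) \<le> t ^ D" if "D * L * t ^ D \<le> p" for L
  proof -
    have "real L \<le> \<Lambda>" using Lam that unfolding W_def by simp
    then have "8 * (real D + real L + 1) \<le> 8 * (y + \<Lambda> + 1)" using Dy by simp
    also have "\<dots> \<le> x / (real t * s)" by (rule H4)
    also have "\<dots> < real W" by (rule W_gt)
    finally have "real (8 * (D + L + 1)) < real W" by simp
    then show ?thesis unfolding W_def by linarith
  qed
  obtain L where L1: "D * L * t ^ D \<le> p"
    and L2: "p < (D + L + 2) * ((L + 3) * t ^ D) + 2 * (D + L + 3)^2"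
    and L3: "(t * t ^ D choose t ^ D) ^ L \<le> T t p"
    using profile_exists[OF t D1 c1 big] by blast
  define C where "C = t * W choose W"
  have C1: "1 \<le> C" unfolding C_def using t by (simp add: Suc_le_eq)
  have L3': "C ^ L \<le> T t p" using L3 unfolding C_def W_def .
  have CL: "1 \<le> C ^ L" using C1 by (rule one_le_power)
  have T1: "1 \<le> T t p" by (rule le_trans[OF CL L3'])
  have LL: "real L \<le> \<Lambda>" using Lam L1 unfolding W_def by simp
  have lnT: "real L * ln (real C) \<le> ln (real (T t p))"
  proof -
    have "real C ^ L \<le> real (T t p)" using L3' by (metis of_nat_le_iff of_nat_power)
    moreover have "0 < real C ^ L" using C1 by simp
    moreover have "0 < real (T t p)" using T1 by simp
    ultimately have "ln (real C ^ L) \<le> ln (real (T t p))" by (subst ln_le_cancel_iff) auto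
    then show ?thesis by (simp add: ln_realpow)
  qed
  have lnC: "K * real W - ln (real t * real W + 1) \<le> ln (real C)"
    unfolding K_def C_def using ln_binom_lower[OF t] .
  define Z where "Z = real D + real L"
  have Z0: "0 \<le> Z" unfolding Z_def by simp
  have ZX: "Z \<le> y + \<Lambda>" unfolding Z_def using Dy LL by simp
  have LW: "x / (y + \<Lambda> + 2) - 2 * (y + \<Lambda> + 3)^2 - 3 * x / s \<le> real L * real W"
  proof -
    have "x < (Z + 2) * ((real L + 3) * real W) + 2 * (Z + 3)^2"
      using L2 unfolding x_def Z_def W_def[symmetric] by (metis (mono_tags, lifting) of_nat_less_iff of_nat_add of_nat_mult of_nat_power of_nat_numeral)
    then have "x - 2 * (Z + 3)^2 < (Z + 2) * ((real L + 3) * real W)" by simp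
    then have "(x - 2 * (Z + 3)^2) / (Z + 2) < (real L + 3) * real W"
      using Z0 by (simp add: divide_less_eq mult.commute)
    moreover have "x / (y + \<Lambda> + 2) \<le> x / (Z + 2)"
      using ZX Z0 x0 by (intro divide_left_mono) auto
    moreover have "2 * (Z + 3)^2 / (Z + 2) \<le> 2 * (y + \<Lambda> + 3)^2"
    proof -
      have "2 * (Z + 3)^2 / (Z + 2) \<le> 2 * (Z + 3)^2" using Z0 by (simp add: divide_le_eq)
      also have "\<dots> \<le> 2 * (y + \<Lambda> + 3)^2" using ZX Z0 by (simp add: power_mono)
      finally show ?thesis .
    qed
    moreover have "(x - 2 * (Z + 3)^2) / (Z + 2) = x / (Z + 2) - 2 * (Z + 3)^2 / (Z + 2)"
      by (simp add: diff_divide_distrib)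
    moreover have "3 * real W \<le> 3 * x / s" using W_le by simp
    ultimately show ?thesis by (simp add: algebra_simps)
  qed
  have lnW: "real L * ln (real t * real W + 1) \<le> \<Lambda> * ln (real t * x + 1)"
  proof (rule mult_mono[OF LL])
    have "real W \<le> x" using W_le xs_le by linarith
    then show "ln (real t * real W + 1) \<le> ln (real t * x + 1)" using W0 t1
      by (subst ln_le_cancel_iff) (auto intro: add_pos_nonneg mult_left_mono)
    show "0 \<le> \<Lambda>" using LL by simp
    show "0 \<le> ln (real t * real W + 1)" using W0 t1 by simp
  qed
  have "K * (x / (y + \<Lambda> + 2) - 2 * (y + \<Lambda> + 3)^2 - 3 * x / s) - \<Lambda> * ln (real t * x + 1)
      \<le> K * (real L * real W) - real L * ln (real t * real W + 1)"
  proof -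
    have "K * (x / (y + \<Lambda> + 2) - 2 * (y + \<Lambda> + 3)^2 - 3 * x / s) \<le> K * (real L * real W)"
      using K0 by (intro mult_left_mono[OF LW]) simp
    then show ?thesis using lnW by linarith
  qed
  also have "\<dots> = real L * (K * real W - ln (real t * real W + 1))" by (simp add: algebra_simps)
  also have "\<dots> \<le> real L * ln (real C)" using lnC by (intro mult_left_mono) auto
  also have "\<dots> \<le> ln (real (T t p))" by (rule lnT)
  finally show ?thesis using T1 by simp
qed


lemma exp_nat_ln: "0 < a \<Longrightarrow> exp (real n * ln a) = a ^ n"
  by (simp add: exp_of_nat_mult)

lemma upper_T:
  fixes t p :: nat and x c K y2 :: real
  defines "x \<equiv> real p"
  defines "c \<equiv> ln (real t)"
  defines "K \<equiv> real t * ln (real t) - (real t - 1) * ln (real t - 1)"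
  defines "y2 \<equiv> ln (x / (ln x)^2) / c"
  assumes t: "t \<ge> 2" and x4: "x \<ge> 4" and H: "y2 \<ge> 2"
  shows "ln (real (T t p)) \<le> ln (real t / (real t - 1)) + K * (x / (y2 - 1) + x / (ln x)^2 + 1)"
proof -
  have t1: "1 < real t" using t by simp
  have K0: "0 < K" unfolding K_def using K_pos[OF t] .
  have l1: "1 < ln x"
  proof -
    have "exp 1 < x" using x4 exp_le by linarith
    then show ?thesis using x4 by (metis exp_gt_zero ln_exp ln_less_cancel_iff less_le_trans zero_less_numeral less_trans)
  qed
  define q where "q = (ln x)^2"
  have q1: "1 < q" unfolding q_def by (rule one_less_power[OF l1]) simp
  have x0: "0 < x" using x4 by simp
  have xq0: "0 < x / q" using x0 q1 by simp
  define k where "k = nat \<lfloor>y2\<rfloor>"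
  have ky: "real k \<le> y2" "y2 < real k + 1" using H unfolding k_def by linarith+
  have k1: "k \<ge> 1" using H unfolding k_def by linarith
  have tk: "real t ^ k \<le> x / q"
    by (rule pow_le_from_log[OF t1 xq0]) (use ky in \<open>simp add: y2_def c_def q_def\<close>)
  define B where "B = x / (y2 - 1) + x / q"
  have B0: "0 \<le> B" unfolding B_def using H x0 q1 by simp
  define N where "N = nat \<lceil>B\<rceil>"
  have NB: "B \<le> real N" "real N \<le> B + 1" unfolding N_def using B0 by linarith+
  have cond: "real p / real k + real t ^ k \<le> real N"
  proof -
    have "real p / real k \<le> x / (y2 - 1)" unfolding x_def
      using ky H x0 x_def by (intro divide_left_mono) auto
    then show ?thesis using tk NB unfolding B_def by linarith
  qed
  define \<rho> where "\<rho> = exp (- K)"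
  define \<tau> where "\<tau> = real t / (real t - 1)"
  have \<rho>0: "0 < \<rho>" unfolding \<rho>_def by simp
  have \<rho>1: "\<rho> \<le> 1" unfolding \<rho>_def using K0 by simp
  have \<tau>1: "1 \<le> \<tau>" unfolding \<tau>_def using t1 by (simp add: le_divide_eq)
  have rt: "real (t - 1) = real t - 1" using t by simp
  have \<rho>eq: "\<rho> = (real t - 1) ^ (t - 1) / real t ^ t"
  proof -
    have "\<rho> = exp (real (t - 1) * ln (real t - 1)) / exp (real t * ln (real t))"
      unfolding \<rho>_def K_def rt by (simp add: exp_diff[symmetric])
    also have "\<dots> = (real t - 1) ^ (t - 1) / real t ^ t"
      using t1 by (simp add: exp_nat_ln del: of_nat_diff)
    finally show ?thesis .
  qed
  have "\<rho> * \<tau> ^ t = 1 / (real t - 1)"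
  proof -
    have e: "Suc (t - 1) = t" using t by simp
    have pw: "(real t - 1) ^ t = (real t - 1) * (real t - 1) ^ (t - 1)"
      using power_Suc[of "real t - 1" "t - 1"] e by simp
    have nz: "(real t - 1) ^ (t - 1) \<noteq> 0" "real t ^ t \<noteq> 0" using t1 by auto
    have "\<rho> * \<tau> ^ t = ((real t - 1) ^ (t - 1) / real t ^ t) * (real t ^ t / (real t - 1) ^ t)"
      by (simp add: \<rho>eq \<tau>_def power_divide)
    also have "\<dots> = (real t - 1) ^ (t - 1) / (real t - 1) ^ t" using nz by simp
    also have "\<dots> = 1 / (real t - 1)" unfolding pw using nz by simp
    finally show ?thesis .
  qed
  moreover have "1 + 1 / (real t - 1) = \<tau>" unfolding \<tau>_def using t1 by (simp add: field_simps)
  ultimately have rt_cond: "1 + \<rho> * \<tau> ^ t \<le> \<tau>" by simp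
  have main: "real (T t p) * \<rho> ^ N \<le> \<tau>"
    by (rule T_upper[OF t k1 cond \<rho>0 \<rho>1 \<tau>1 rt_cond])
  have rhs0: "0 \<le> ln \<tau> + K * (B + 1)" using \<tau>1 K0 B0 by simp
  have "ln (real (T t p)) \<le> ln \<tau> + K * (B + 1)"
  proof (cases "T t p = 0")
    case True then show ?thesis using rhs0 by simp
  next
    case False
    then have T0: "0 < real (T t p)" by simp
    have "ln (real (T t p) * \<rho> ^ N) \<le> ln \<tau>" using main T0 \<rho>0 \<tau>1 by (subst ln_le_cancel_iff) auto
    moreover have "ln (real (T t p) * \<rho> ^ N) = ln (real (T t p)) - K * real N"
      using T0 \<rho>0 by (simp add: ln_mult ln_realpow \<rho>_def)
    moreover have "K * real N \<le> K * (B + 1)" using NB K0 by simp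
    ultimately show ?thesis by linarith
  qed
  then show ?thesis unfolding B_def q_def \<tau>_def by simp
qed


lemma asym_lower:
  fixes c tr K :: real
  assumes "c > 0" "tr > 0" "K > 0"
  shows "((\<lambda>x. (K * (x / (ln (x / (ln x * sqrt (ln x))) / c + tr * (ln x * sqrt (ln x)) / (ln (x / (ln x * sqrt (ln x))) / c - 1) + 2)
   - 2 * (ln (x / (ln x * sqrt (ln x))) / c + tr * (ln x * sqrt (ln x)) / (ln (x / (ln x * sqrt (ln x))) / c - 1) + 3)^2
   - 3 * x / (ln x * sqrt (ln x)))
   - tr * (ln x * sqrt (ln x)) / (ln (x / (ln x * sqrt (ln x))) / c - 1) * ln (tr * x + 1)) / (K * c * x / ln x)) \<longlongrightarrow> 1) at_top"
  using assms by (real_asymp simp add: field_simps)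

lemma asym_upper:
  fixes c K a :: real
  assumes "c > 0" "K > 0"
  shows "((\<lambda>x. (a + K * (x / (ln (x / (ln x)^2) / c - 1) + x / (ln x)^2 + 1)) / (K * c * x / ln x)) \<longlongrightarrow> 1) at_top"
  using assms by (real_asymp simp add: field_simps)

lemma asym_ev:
  fixes c tr :: real
  assumes "c > 0" "tr > 0"
  shows "\<forall>\<^sub>F x in at_top. 4 \<le> x \<and> 2 \<le> ln (x / (ln x * sqrt (ln x))) / c
    \<and> (ln (x / (ln x * sqrt (ln x))) / c + 1) * 2 * x / (ln x * sqrt (ln x)) + 2 * (ln (x / (ln x * sqrt (ln x))) / c + 1)^2 \<le> x
    \<and> 8 * (ln (x / (ln x * sqrt (ln x))) / c + tr * (ln x * sqrt (ln x)) / (ln (x / (ln x * sqrt (ln x))) / c - 1) + 1) \<le> x / (tr * (ln x * sqrt (ln x)))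
    \<and> 2 \<le> ln (x / (ln x)^2) / c"
proof -
  have 1: "\<forall>\<^sub>F x in at_top. (4::real) \<le> x" by real_asymp
  have 2: "\<forall>\<^sub>F x in at_top. 2 \<le> ln (x / (ln x * sqrt (ln x))) / c" using assms by real_asymp
  have 3: "\<forall>\<^sub>F x in at_top. (ln (x / (ln x * sqrt (ln x))) / c + 1) * 2 * x / (ln x * sqrt (ln x)) + 2 * (ln (x / (ln x * sqrt (ln x))) / c + 1)^2 \<le> x"
    using assms by real_asymp
  have 4: "\<forall>\<^sub>F x in at_top. 8 * (ln (x / (ln x * sqrt (ln x))) / c + tr * (ln x * sqrt (ln x)) / (ln (x / (ln x * sqrt (ln x))) / c - 1) + 1) \<le> x / (tr * (ln x * sqrt (ln x)))"
    using assms by real_asymp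
  have 5: "\<forall>\<^sub>F x in at_top. 2 \<le> ln (x / (ln x)^2) / c" using assms by real_asymp
  show ?thesis using eventually_conj[OF 1 eventually_conj[OF 2 eventually_conj[OF 3 eventually_conj[OF 4 5]]]] by simp
qed


theorem theorem1:
  fixes t :: nat and b :: real
  assumes "t \<ge> 2" and "b > 1"
  defines "\<alpha> \<equiv> entropy b (1 / real t) * real t * log b (real t)"
  shows "((\<lambda>p::nat. log b (real (T t p)) / (\<alpha> * real p / log b (real p)))
          \<longlongrightarrow> 1) at_top"
proof -
  note t = assms(1)
  define c where "c = ln (real t)"
  define K where "K = real t * ln (real t) - (real t - 1) * ln (real t - 1)"
  have t1: "1 < real t" using t by simp
  have c0: "0 < c" unfolding c_def using t1 by simp
  have K0: "0 < K" unfolding K_def using K_pos[OF t] .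
  have tr0: "0 < real t" using t1 by simp
  have lb: "0 < ln b" using assms(2) by simp
  have alpha: "\<alpha> = K * c / (ln b)^2"
  proof -
    have e1: "ln (1 / real t) = - ln (real t)" using tr0 by (simp add: ln_div)
    have "1 - 1 / real t = (real t - 1) / real t" using tr0 by (simp add: field_simps)
    then have e2: "ln (1 - 1 / real t) = ln (real t - 1) - ln (real t)" using t1 by (simp add: ln_div)
    show ?thesis unfolding \<alpha>_def entropy_def log_def e1 e2 K_def c_def using tr0 lb
      by (simp add: field_simps power2_eq_square)
  qed
  define GL where "GL x = (K * (x / (ln (x / (ln x * sqrt (ln x))) / c + real t * (ln x * sqrt (ln x)) / (ln (x / (ln x * sqrt (ln x))) / c - 1) + 2)
   - 2 * (ln (x / (ln x * sqrt (ln x))) / c + real t * (ln x * sqrt (ln x)) / (ln (x / (ln x * sqrt (ln x))) / c - 1) + 3)^2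
   - 3 * x / (ln x * sqrt (ln x)))
   - real t * (ln x * sqrt (ln x)) / (ln (x / (ln x * sqrt (ln x))) / c - 1) * ln (real t * x + 1)) / (K * c * x / ln x)" for x
  define GU where "GU x = (ln (real t / (real t - 1)) + K * (x / (ln (x / (ln x)^2) / c - 1) + x / (ln x)^2 + 1)) / (K * c * x / ln x)" for x
  have limL: "(GL \<longlongrightarrow> 1) at_top" unfolding GL_def by (rule asym_lower[OF c0 tr0 K0])
  have limU: "(GU \<longlongrightarrow> 1) at_top" unfolding GU_def by (rule asym_upper[OF c0 K0])
  have limL': "((\<lambda>p. GL (real p)) \<longlongrightarrow> 1) sequentially"
    by (rule filterlim_compose[OF limL filterlim_real_sequentially])
  have limU': "((\<lambda>p. GU (real p)) \<longlongrightarrow> 1) sequentially"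
    by (rule filterlim_compose[OF limU filterlim_real_sequentially])
  have ev: "\<forall>\<^sub>F p in sequentially. 4 \<le> real p \<and> 2 \<le> ln (real p / (ln (real p) * sqrt (ln (real p)))) / c
    \<and> (ln (real p / (ln (real p) * sqrt (ln (real p)))) / c + 1) * 2 * real p / (ln (real p) * sqrt (ln (real p))) + 2 * (ln (real p / (ln (real p) * sqrt (ln (real p)))) / c + 1)^2 \<le> real p
    \<and> 8 * (ln (real p / (ln (real p) * sqrt (ln (real p)))) / c + real t * (ln (real p) * sqrt (ln (real p))) / (ln (real p / (ln (real p) * sqrt (ln (real p)))) / c - 1) + 1) \<le> real p / (real t * (ln (real p) * sqrt (ln (real p))))
    \<and> 2 \<le> ln (real p / (ln (real p))^2) / c"
    by (rule eventually_compose_filterlim[OF asym_ev[OF c0 tr0] filterlim_real_sequentially])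
  have bounds: "\<forall>\<^sub>F p in sequentially.
     GL (real p) \<le> log b (real (T t p)) / (\<alpha> * real p / log b (real p)) \<and>
     log b (real (T t p)) / (\<alpha> * real p / log b (real p)) \<le> GU (real p)"
    using ev
  proof eventually_elim
    case (elim p)
    have lo: "1 \<le> T t p \<and> K * (real p / (ln (real p / (ln (real p) * sqrt (ln (real p)))) / c + real t * (ln (real p) * sqrt (ln (real p))) / (ln (real p / (ln (real p) * sqrt (ln (real p)))) / c - 1) + 2)
   - 2 * (ln (real p / (ln (real p) * sqrt (ln (real p)))) / c + real t * (ln (real p) * sqrt (ln (real p))) / (ln (real p / (ln (real p) * sqrt (ln (real p)))) / c - 1) + 3)^2
   - 3 * real p / (ln (real p) * sqrt (ln (real p))))
   - real t * (ln (real p) * sqrt (ln (real p))) / (ln (real p / (ln (real p) * sqrt (ln (real p)))) / c - 1) * ln (real t * real p + 1) \<le> ln (real (T t p))"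
      unfolding K_def c_def by (rule lower_T[OF t]) (use elim in \<open>simp_all add: c_def\<close>)
    have up: "ln (real (T t p)) \<le> ln (real t / (real t - 1)) + K * (real p / (ln (real p / (ln (real p))^2) / c - 1) + real p / (ln (real p))^2 + 1)"
      unfolding K_def c_def by (rule upper_T[OF t]) (use elim in \<open>simp_all add: c_def\<close>)
    have l1: "1 < ln (real p)"
    proof -
      have "exp 1 < real p" using elim exp_le by linarith
      then show ?thesis using elim by (metis exp_gt_zero ln_exp ln_less_cancel_iff less_le_trans zero_less_numeral less_trans)
    qed
    have den: "0 < K * c * real p / ln (real p)" using K0 c0 l1 elim by simp
    have E: "log b (real (T t p)) / (\<alpha> * real p / log b (real p)) = ln (real (T t p)) / (K * c * real p / ln (real p))"
      unfolding alpha log_def using lb l1 K0 c0 elim by (simp add: field_simps power2_eq_square)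
    have "GL (real p) \<le> ln (real (T t p)) / (K * c * real p / ln (real p))"
      unfolding GL_def by (rule divide_right_mono[OF lo[THEN conjunct2]]) (use den in simp)
    moreover have "ln (real (T t p)) / (K * c * real p / ln (real p)) \<le> GU (real p)"
      unfolding GU_def by (rule divide_right_mono[OF up]) (use den in simp)
    ultimately show ?case unfolding E by simp
  qed
  show ?thesis
    by (rule tendsto_sandwich[OF eventually_mono[OF bounds] eventually_mono[OF bounds] limL' limU']) auto
qed

end
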